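(* Let $K$ be a positive integer, let $p$ be a prime number, and let $\varepsilon$ and $\kappa$ be positive real numbers with $\kappa<1$. For $k=1,\ldots,K$, let $\{a_{k,n}\}_{n=1}^\infty$ and $\{b_{k,n}\}_{n=1}^\infty$ be sequences of non-zero integers with $p\nmid\gcd(a_{k,n},b_{k,n})$, and set $a_{0,n}=1$ for all $n$. Suppose that for each $k=1,\ldots,K$: for each sufficiently large $N$ there is exactly one $n\le N$ with $\nu_p(a_{k,n})=\max_{1\le m\le N}\nu_p(a_{k,m})$, and \[\lim_{N\to\infty}\frac{\max_{1\le n\le N}\nu_p(a_{k,n})}{1+\max_{1\le n\le N}\nu_p(a_{k-1,n})}=\infty.\] Suppose there is a non-decreasing sequence $\{a_n\}_{n=1}^\infty$ of positive integers and an integer $A_0$ such that for each $k=1,\ldots,K$, each integer $A\ge A_0$ and all sufficiently large $n$: \[ n^{1+\varepsilon}\le a_n\le a_{n+1},\qquad |b_{k,n}|\le 2^{(\log_2 a_n)^\kappa},\] \[ a_n2^{-(\log_2 a_n)^\kappa}\le |a_{k,n}|\le \max\big\{a_n2^{(\log_2 a_n)^\kappa},\,2^{A^n}\big\},\] and for each integer $A\ge A_0$, $\limsup_{n\to\infty}a_n^{1/A^n}=\infty$. For $k=1,\ldots,K$ set $\alpha_k=\sum_{n=1}^\infty\frac{b_{k,n}}{a_{k,n}}$. Then $\alpha_1,\ldots,\alpha_K$ are algebraically independent over $\mathbb Q$.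
   Context: For a prime $p$ and integer $n$, $\nu_p(n)$ denotes the $p$-adic valuation of $n$ (with $\nu_p(0)=\infty$). *)

theory Defs
  imports Complex_Main "HOL-Library.Extended_Real" "HOL-Computational_Algebra.Primes"
begin

text \<open>Algebraic independence over the rationals of the reals alpha 1, ..., alpha K:
  a multivariate polynomial with rational coefficients in K variables is represented by a finite
  set S of exponent vectors (functions nat to nat, supported on 1..K) and coefficients c.\<close>
definition alg_indep_over_Q :: "nat \<Rightarrow> (nat \<Rightarrow> real) \<Rightarrow> bool" where
  "alg_indep_over_Q K \<alpha> \<longleftrightarrow>
     (\<forall>(S :: (nat \<Rightarrow> nat) set) (c :: (nat \<Rightarrow> nat) \<Rightarrow> rat).
        finite S \<and> (\<forall>e\<in>S. \<forall>i. i \<notin> {1..K} \<longrightarrow> e i = 0) \<and>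
        (\<Sum>e\<in>S. of_rat (c e) * (\<Prod>k\<in>{1..K}. \<alpha> k ^ e k)) = 0
        \<longrightarrow> (\<forall>e\<in>S. c e = 0))"

definition maxval :: "nat \<Rightarrow> (nat \<Rightarrow> int) \<Rightarrow> nat \<Rightarrow> nat" where
  "maxval p a N = Max ((\<lambda>m. multiplicity (int p) (a m)) ` {1..N})"

end

theory Submission
  imports Defs "HOL-Analysis.Summation_Tests"
begin
lemma padic_T:
  fixes q :: int and a b :: "nat \<Rightarrow> int" and I :: "nat set"
  assumes q: "prime q" and fin: "finite I" and ns: "ns \<in> I"
    and nz: "\<forall>n\<in>I. a n \<noteq> 0 \<and> b n \<noteq> 0"
    and lt: "\<forall>n\<in>I-{ns}. multiplicity q (a n) < multiplicity q (a ns)"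
    and b0: "multiplicity q (b ns) = 0"
  shows "(\<Sum>n\<in>I. b n * (\<Prod>m\<in>I-{n}. a m)) \<noteq> 0 \<and>
         multiplicity q (\<Sum>n\<in>I. b n * (\<Prod>m\<in>I-{n}. a m)) + multiplicity q (a ns)
           = multiplicity q (\<Prod>m\<in>I. a m)"
proof -
  have qe: "prime_elem q" using q by (rule prime_imp_prime_elem)
  have nu: "\<not> is_unit q" using q not_prime_unit by blast
  define mD where "mD = (\<Sum>m\<in>I. multiplicity q (a m))"
  have mD: "multiplicity q (\<Prod>m\<in>I. a m) = mD"
    unfolding mD_def using nz fin by (intro prime_elem_multiplicity_prod_distrib[OF qe]) auto
  have mP: "multiplicity q (\<Prod>m\<in>I-{n}. a m) = mD - multiplicity q (a n)"
    and mP2: "multiplicity q (a n) \<le> mD" if "n \<in> I" for n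
  proof -
    have "mD = multiplicity q (a n) + (\<Sum>m\<in>I-{n}. multiplicity q (a m))"
      unfolding mD_def using that fin by (simp add: sum.remove)
    moreover have "multiplicity q (\<Prod>m\<in>I-{n}. a m) = (\<Sum>m\<in>I-{n}. multiplicity q (a m))"
      using nz fin by (intro prime_elem_multiplicity_prod_distrib[OF qe]) auto
    ultimately show "multiplicity q (\<Prod>m\<in>I-{n}. a m) = mD - multiplicity q (a n)"
      "multiplicity q (a n) \<le> mD" by auto
  qed
  have Pnz: "(\<Prod>m\<in>I-{n}. a m) \<noteq> 0" if "n \<in> I" for n using nz fin by auto
  define v where "v = mD - multiplicity q (a ns)"
  have mt: "multiplicity q (b n * (\<Prod>m\<in>I-{n}. a m)) = multiplicity q (b n) + (mD - multiplicity q (a n))"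
    if "n \<in> I" for n
    using prime_elem_multiplicity_mult_distrib[OF qe, of "b n" "\<Prod>m\<in>I-{n}. a m"] nz that Pnz mP by auto
  have d1: "q ^ Suc v dvd b n * (\<Prod>m\<in>I-{n}. a m)" if "n \<in> I-{ns}" for n
  proof -
    have l: "multiplicity q (a n) < multiplicity q (a ns)" using lt that by auto
    have nI: "n \<in> I" using that by auto
    have e1: "multiplicity q (b n * (\<Prod>m\<in>I-{n}. a m)) = multiplicity q (b n) + (mD - multiplicity q (a n))"
      by (rule mt[OF nI])
    have e2: "multiplicity q (a ns) \<le> mD" by (rule mP2[OF ns])
    have "Suc v \<le> multiplicity q (b n * (\<Prod>m\<in>I-{n}. a m))"
      unfolding e1 v_def using l e2 by linarith
    then show ?thesis by (rule multiplicity_dvd')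
  qed
  have d2: "\<not> q ^ Suc v dvd b ns * (\<Prod>m\<in>I-{ns}. a m)"
    using mt[OF ns] b0 power_dvd_iff_le_multiplicity[of "b ns * (\<Prod>m\<in>I-{ns}. a m)" q "Suc v"]
      nz ns Pnz nu unfolding v_def by auto
  have d3: "q ^ v dvd b n * (\<Prod>m\<in>I-{n}. a m)" if "n \<in> I" for n
  proof (cases "n = ns")
    case True then show ?thesis using mt[OF ns] b0 by (intro multiplicity_dvd') (simp add: v_def)
  next
    case False
    then have "n \<in> I - {ns}" using that by auto
    then have "q ^ Suc v dvd b n * (\<Prod>m\<in>I-{n}. a m)" by (rule d1)
    then show ?thesis using dvd_trans[OF le_imp_power_dvd[of v "Suc v" q]] by simp
  qed
  have split: "(\<Sum>n\<in>I. b n * (\<Prod>m\<in>I-{n}. a m)) =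
     b ns * (\<Prod>m\<in>I-{ns}. a m) + (\<Sum>n\<in>I-{ns}. b n * (\<Prod>m\<in>I-{n}. a m))"
    using fin ns by (simp add: sum.remove)
  have "q ^ Suc v dvd (\<Sum>n\<in>I-{ns}. b n * (\<Prod>m\<in>I-{n}. a m))" using d1 by (intro dvd_sum) auto
  hence "q ^ Suc v dvd (\<Sum>n\<in>I. b n * (\<Prod>m\<in>I-{n}. a m)) \<longleftrightarrow> q ^ Suc v dvd b ns * (\<Prod>m\<in>I-{ns}. a m)"
    unfolding split by (rule dvd_add_left_iff)
  hence nd: "\<not> q ^ Suc v dvd (\<Sum>n\<in>I. b n * (\<Prod>m\<in>I-{n}. a m))"
    using d2 by simp
  have dv: "q ^ v dvd (\<Sum>n\<in>I. b n * (\<Prod>m\<in>I-{n}. a m))" using d3 by (intro dvd_sum) auto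
  have "multiplicity q (\<Sum>n\<in>I. b n * (\<Prod>m\<in>I-{n}. a m)) = v" by (rule multiplicity_eqI[OF dv nd])
  moreover have "(\<Sum>n\<in>I. b n * (\<Prod>m\<in>I-{n}. a m)) \<noteq> 0" using nd by auto
  ultimately show ?thesis using mD mP2[OF ns] unfolding v_def by auto
qed

lemma sum_split3:
  fixes f :: "nat \<Rightarrow> 'a::comm_monoid_add"
  assumes "j \<in> {1..K}"
  shows "(\<Sum>k\<in>{1..K}. f k) = (\<Sum>k\<in>{1..<j}. f k) + f j + (\<Sum>k\<in>{j<..K}. f k)"
proof -
  have "{1..K} = {1..<j} \<union> ({j} \<union> {j<..K})" using assms by auto
  moreover have "sum f ({1..<j} \<union> {j<..K}) = sum f {1..<j} + sum f {j<..K}"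
    by (rule sum.union_disjoint) auto
  ultimately show ?thesis by (simp add: add_ac)
qed

lemma gap_aux:
  fixes M e e' :: "nat \<Rightarrow> nat"
  assumes j: "j \<in> {1..K}" and lt: "e' j < e j" and eq: "\<forall>k\<in>{j<..K}. e k = e' k"
    and bd: "\<forall>k\<in>{1..K}. e' k \<le> E"
    and Mj: "M j > E * (\<Sum>k\<in>{1..<j}. M k) + c0"
  shows "(\<Sum>k\<in>{1..K}. e' k * M k) + c0 < (\<Sum>k\<in>{1..K}. e k * M k)"
proof -
  have t: "(\<Sum>k\<in>{j<..K}. e k * M k) = (\<Sum>k\<in>{j<..K}. e' k * M k)" using eq by simp
  have l: "(\<Sum>k\<in>{1..<j}. e' k * M k) \<le> E * (\<Sum>k\<in>{1..<j}. M k)"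
    unfolding sum_distrib_left using bd j by (intro sum_mono) (auto intro: mult_right_mono)
  have "e' j * M j + M j \<le> e j * M j" using lt
    by (metis Suc_leI add.commute mult_Suc mult_le_mono1)
  then show ?thesis using sum_split3[OF j, of "\<lambda>k. e k * M k"] sum_split3[OF j, of "\<lambda>k. e' k * M k"] t l Mj
    by linarith
qed

lemma gap:
  fixes M e e' :: "nat \<Rightarrow> nat"
  assumes se: "\<forall>i. i \<notin> {1..K} \<longrightarrow> e i = 0" and se': "\<forall>i. i \<notin> {1..K} \<longrightarrow> e' i = 0"
    and bd: "\<forall>k\<in>{1..K}. e k \<le> E \<and> e' k \<le> E" and ne: "e \<noteq> e'"
    and Mj: "\<forall>j\<in>{1..K}. M j > E * (\<Sum>k\<in>{1..<j}. M k) + c0"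
  shows "(\<Sum>k\<in>{1..K}. e k * M k) + c0 < (\<Sum>k\<in>{1..K}. e' k * M k) \<or>
         (\<Sum>k\<in>{1..K}. e' k * M k) + c0 < (\<Sum>k\<in>{1..K}. e k * M k)"
proof -
  obtain i where i: "e i \<noteq> e' i" using ne by auto
  define J where "J = {k\<in>{1..K}. e k \<noteq> e' k}"
  have iJ: "i \<in> J" using i se se' unfolding J_def by (metis (mono_tags, lifting) mem_Collect_eq)
  have fJ: "finite J" unfolding J_def by auto
  define j where "j = Max J"
  have jJ: "j \<in> J" unfolding j_def using fJ iJ by (intro Max_in) auto
  have j: "j \<in> {1..K}" "e j \<noteq> e' j" using jJ unfolding J_def by auto
  have eq: "\<forall>k\<in>{j<..K}. e k = e' k"
  proof
    fix k assume k: "k \<in> {j<..K}"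
    show "e k = e' k"
    proof (rule ccontr)
      assume "e k \<noteq> e' k"
      hence "k \<in> J" using k j unfolding J_def by auto
      hence "k \<le> j" unfolding j_def using fJ by simp
      thus False using k by auto
    qed
  qed
  show ?thesis
  proof (cases "e' j < e j")
    case True
    then show ?thesis using gap_aux[OF j(1) True eq _ Mj[rule_format, OF j(1)]] bd by auto
  next
    case False
    hence lt2: "e j < e' j" using j by auto
    have eq2: "\<forall>k\<in>{j<..K}. e' k = e k" using eq by auto
    show ?thesis using gap_aux[of j K e e' E M c0, OF j(1) lt2 eq2 _ Mj[rule_format, OF j(1)]] bd by auto
  qed
qed

lemma Qnz:
  fixes q :: int and S :: "(nat \<Rightarrow> nat) set" and C :: "(nat \<Rightarrow> nat) \<Rightarrow> int"
    and T D :: "nat \<Rightarrow> int" and M :: "nat \<Rightarrow> nat"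
  assumes q: "prime q" and fin: "finite S" and ne: "S \<noteq> {}"
    and C: "\<forall>e\<in>S. C e \<noteq> 0 \<and> multiplicity q (C e) \<le> c0"
    and TD: "\<forall>k\<in>{1..K}. T k \<noteq> 0 \<and> D k \<noteq> 0 \<and> multiplicity q (T k) + M k = multiplicity q (D k)"
    and bd: "\<forall>e\<in>S. \<forall>k\<in>{1..K}. e k \<le> E"
    and gp: "\<forall>e\<in>S. \<forall>e'\<in>S. e \<noteq> e' \<longrightarrow>
        (\<Sum>k\<in>{1..K}. e k * M k) + c0 < (\<Sum>k\<in>{1..K}. e' k * M k) \<or>
        (\<Sum>k\<in>{1..K}. e' k * M k) + c0 < (\<Sum>k\<in>{1..K}. e k * M k)"
  shows "(\<Sum>e\<in>S. C e * (\<Prod>k\<in>{1..K}. T k ^ e k * D k ^ (E - e k))) \<noteq> 0"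
proof -
  have qe: "prime_elem q" using q by (rule prime_imp_prime_elem)
  have nu: "\<not> is_unit q" using q not_prime_unit by blast
  define W where "W e = (\<Sum>k\<in>{1..K}. e k * M k)" for e :: "nat \<Rightarrow> nat"
  define V where "V = (\<Sum>k\<in>{1..K}. E * multiplicity q (D k))"
  define tm where "tm e = C e * (\<Prod>k\<in>{1..K}. T k ^ e k * D k ^ (E - e k))" for e
  have tnz: "tm e \<noteq> 0" if "e \<in> S" for e using that C TD unfolding tm_def by auto
  have mt: "multiplicity q (tm e) + W e = multiplicity q (C e) + V" if e: "e \<in> S" for e
  proof -
    have p: "multiplicity q (\<Prod>k\<in>{1..K}. T k ^ e k * D k ^ (E - e k)) =
       (\<Sum>k\<in>{1..K}. multiplicity q (T k ^ e k * D k ^ (E - e k)))"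
      using TD by (intro prime_elem_multiplicity_prod_distrib[OF qe]) auto
    have pk: "multiplicity q (T k ^ e k * D k ^ (E - e k)) + e k * M k = E * multiplicity q (D k)"
      if k: "k \<in> {1..K}" for k
    proof -
      have h1: "multiplicity q (T k ^ e k * D k ^ (E - e k)) =
            e k * multiplicity q (T k) + (E - e k) * multiplicity q (D k)"
        using TD k by (simp add: prime_elem_multiplicity_mult_distrib[OF qe]
            prime_elem_multiplicity_power_distrib[OF qe])
      have h2: "e k \<le> E" using bd e k by auto
      have h3: "multiplicity q (T k) + M k = multiplicity q (D k)" using TD k by auto
      have x1: "e k * multiplicity q (T k) + e k * M k = e k * multiplicity q (D k)"
        using h3 by (metis add_mult_distrib2)
      have x2: "(E - e k) * multiplicity q (D k) + e k * multiplicity q (D k) = E * multiplicity q (D k)"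
        using h2 by (metis add_mult_distrib le_add_diff_inverse2)
      show ?thesis using h1 x1 x2 by linarith
    qed
    have "multiplicity q (tm e) = multiplicity q (C e) +
           (\<Sum>k\<in>{1..K}. multiplicity q (T k ^ e k * D k ^ (E - e k)))"
      unfolding tm_def using p C e TD
      by (subst prime_elem_multiplicity_mult_distrib[OF qe]) auto
    moreover have "(\<Sum>k\<in>{1..K}. multiplicity q (T k ^ e k * D k ^ (E - e k))) + W e = V"
      unfolding W_def V_def sum.distrib[symmetric] using pk by (intro sum.cong) auto
    ultimately show ?thesis by simp
  qed
  obtain es where es: "es \<in> S" "\<forall>e\<in>S. W e \<le> W es"
  proof -
    have "Max (W ` S) \<in> W ` S" using fin ne by (intro Max_in) auto
    then obtain es where "es \<in> S" "W es = Max (W ` S)" by auto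
    moreover have "\<forall>e\<in>S. W e \<le> Max (W ` S)" using fin by auto
    ultimately show ?thesis using that by auto
  qed
  define t where "t = multiplicity q (tm es)"
  have d1: "q ^ Suc t dvd tm e" if "e \<in> S - {es}" for e
  proof -
    have "W e + c0 < W es" using gp es that unfolding W_def by fastforce
    moreover have "multiplicity q (C es) \<le> c0" using C es by auto
    ultimately have "Suc t \<le> multiplicity q (tm e)"
      using mt[of e] mt[of es] that es unfolding t_def by auto
    then show ?thesis by (rule multiplicity_dvd')
  qed
  have d2: "\<not> q ^ Suc t dvd tm es"
    using power_dvd_iff_le_multiplicity[of "tm es" q "Suc t"] tnz[OF es(1)] nu unfolding t_def by auto
  have "q ^ Suc t dvd (\<Sum>e\<in>S-{es}. tm e)" using d1 by (intro dvd_sum) auto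
  moreover have "(\<Sum>e\<in>S. tm e) = tm es + (\<Sum>e\<in>S-{es}. tm e)" using fin es by (simp add: sum.remove)
  ultimately have "q ^ Suc t dvd (\<Sum>e\<in>S. tm e) \<longleftrightarrow> q ^ Suc t dvd tm es"
    by (simp add: dvd_add_left_iff)
  hence "\<not> q ^ Suc t dvd (\<Sum>e\<in>S. tm e)" using d2 by simp
  then show ?thesis unfolding tm_def by auto
qed

lemma prod_diff_bound:
  fixes f g :: "'i \<Rightarrow> real"
  assumes "finite I" "B \<ge> 1" "\<forall>i\<in>I. \<bar>f i\<bar> \<le> B \<and> \<bar>g i\<bar> \<le> B"
  shows "\<bar>(\<Prod>i\<in>I. f i) - (\<Prod>i\<in>I. g i)\<bar> \<le> B ^ card I * (\<Sum>i\<in>I. \<bar>f i - g i\<bar>)"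
  using assms
proof (induction I rule: finite_induct)
  case empty
  then show ?case by simp
next
  case (insert x F)
  have IH: "\<bar>(\<Prod>i\<in>F. f i) - (\<Prod>i\<in>F. g i)\<bar> \<le> B ^ card F * (\<Sum>i\<in>F. \<bar>f i - g i\<bar>)"
    using insert by auto
  have fx: "\<bar>f x\<bar> \<le> B" "\<bar>g x\<bar> \<le> B" using insert by auto
  have gF: "\<bar>\<Prod>i\<in>F. g i\<bar> \<le> B ^ card F"
    unfolding abs_prod using insert
    by (metis (no_types, lifting) abs_ge_zero insert_iff prod_constant prod_mono)
  have Bp: "B ^ card F \<le> B ^ Suc (card F)" by (rule power_increasing) (use insert.prems(1) in auto)
  have s0: "0 \<le> (\<Sum>i\<in>F. \<bar>f i - g i\<bar>)" by (simp add: sum_nonneg)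
  have "(\<Prod>i\<in>insert x F. f i) - (\<Prod>i\<in>insert x F. g i) =
        f x * ((\<Prod>i\<in>F. f i) - (\<Prod>i\<in>F. g i)) + (f x - g x) * (\<Prod>i\<in>F. g i)"
    using insert by (simp add: algebra_simps)
  also have "\<bar>\<dots>\<bar> \<le> \<bar>f x\<bar> * \<bar>(\<Prod>i\<in>F. f i) - (\<Prod>i\<in>F. g i)\<bar> + \<bar>f x - g x\<bar> * \<bar>\<Prod>i\<in>F. g i\<bar>"
    by (metis abs_mult abs_triangle_ineq)
  also have "\<dots> \<le> B * (B ^ card F * (\<Sum>i\<in>F. \<bar>f i - g i\<bar>)) + \<bar>f x - g x\<bar> * B ^ card F"
    using insert.prems(1) by (intro add_mono mult_mono IH fx gF) auto
  also have "\<dots> \<le> B ^ Suc (card F) * (\<Sum>i\<in>F. \<bar>f i - g i\<bar>) + \<bar>f x - g x\<bar> * B ^ Suc (card F)"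
    using Bp by (intro add_mono mult_left_mono) (auto simp: mult.assoc)
  also have "\<dots> = B ^ card (insert x F) * (\<Sum>i\<in>insert x F. \<bar>f i - g i\<bar>)"
    using insert by (simp add: algebra_simps)
  finally show ?case .
qed

lemma power_diff_bound:
  fixes x y :: real
  assumes "B \<ge> 1" "\<bar>x\<bar> \<le> B" "\<bar>y\<bar> \<le> B"
  shows "\<bar>x ^ n - y ^ n\<bar> \<le> B ^ n * (real n * \<bar>x - y\<bar>)"
  using prod_diff_bound[of "{..<n}" B "\<lambda>_. x" "\<lambda>_. y"] assms by simp

lemma mon_lip:
  fixes x y :: "nat \<Rightarrow> real" and e :: "nat \<Rightarrow> nat"
  assumes B: "B \<ge> 1" and bx: "\<forall>k\<in>{1..K}. \<bar>x k\<bar> \<le> B \<and> \<bar>y k\<bar> \<le> B"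
    and be: "\<forall>k\<in>{1..K}. e k \<le> E" and d: "\<forall>k\<in>{1..K}. \<bar>x k - y k\<bar> \<le> \<delta>"
  shows "\<bar>(\<Prod>k\<in>{1..K}. x k ^ e k) - (\<Prod>k\<in>{1..K}. y k ^ e k)\<bar>
          \<le> B ^ (E * K) * (real K * (B ^ E * (real E * \<delta>)))"
proof -
  have pb: "\<bar>z ^ e k\<bar> \<le> B ^ E" if "\<bar>z\<bar> \<le> B" "k \<in> {1..K}" for z k
  proof -
    have "\<bar>z ^ e k\<bar> = \<bar>z\<bar> ^ e k" by (simp add: power_abs)
    also have "\<dots> \<le> B ^ e k" using that by (intro power_mono) auto
    also have "\<dots> \<le> B ^ E" using B be that by (intro power_increasing) auto
    finally show ?thesis .
  qed
  have B1: "B ^ E \<ge> 1" using B by simp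
  have "\<bar>(\<Prod>k\<in>{1..K}. x k ^ e k) - (\<Prod>k\<in>{1..K}. y k ^ e k)\<bar>
        \<le> (B ^ E) ^ card {1..K} * (\<Sum>k\<in>{1..K}. \<bar>x k ^ e k - y k ^ e k\<bar>)"
  proof (rule prod_diff_bound[OF finite_atLeastAtMost B1])
    show "\<forall>k\<in>{1..K}. \<bar>x k ^ e k\<bar> \<le> B ^ E \<and> \<bar>y k ^ e k\<bar> \<le> B ^ E"
    proof
      fix k assume k: "k \<in> {1..K}"
      show "\<bar>x k ^ e k\<bar> \<le> B ^ E \<and> \<bar>y k ^ e k\<bar> \<le> B ^ E" using pb[OF _ k] bx k by blast
    qed
  qed
  also have "\<dots> \<le> B ^ (E * K) * (\<Sum>k\<in>{1..K}. B ^ E * (real E * \<delta>))"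
  proof (intro mult_mono sum_mono)
    fix k assume k: "k \<in> {1..K}"
    have "\<bar>x k ^ e k - y k ^ e k\<bar> \<le> B ^ e k * (real (e k) * \<bar>x k - y k\<bar>)"
      using bx k B by (intro power_diff_bound) auto
    also have "\<dots> \<le> B ^ E * (real E * \<delta>)"
      using B be k d by (intro mult_mono power_increasing) (auto intro!: mult_mono)
    finally show "\<bar>x k ^ e k - y k ^ e k\<bar> \<le> B ^ E * (real E * \<delta>)" .
  next
    show "(B ^ E) ^ card {1..K} \<le> B ^ (E * K)" by (simp add: power_mult)
  next
    show "0 \<le> B ^ (E * K)" using B by simp
  next
    show "0 \<le> (\<Sum>k\<in>{1..K}. \<bar>x k ^ e k - y k ^ e k\<bar>)" by (simp add: sum_nonneg)
  qed
  also have "\<dots> = B ^ (E * K) * (real K * (B ^ E * (real E * \<delta>)))" by simp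
  finally show ?thesis .
qed

lemma chain_sum:
  fixes M :: "nat \<Rightarrow> nat"
  assumes R: "R \<ge> 1" and h: "\<forall>k\<in>{1..K}. M k \<ge> R * (1 + M (k - 1))"
  shows "j \<in> {1..K} \<Longrightarrow> (\<Sum>k\<in>{1..<j}. M k) \<le> (j - 1) * M (j - 1)"
proof (induction j)
  case 0
  then show ?case by simp
next
  case (Suc j)
  show ?case
  proof (cases "j = 0")
    case True then show ?thesis by simp
  next
    case False
    hence j: "j \<in> {1..K}" using Suc.prems by auto
    have IH: "(\<Sum>k\<in>{1..<j}. M k) \<le> (j - 1) * M (j - 1)" using Suc.IH j by auto
    have m1: "M (j - 1) \<le> R * (1 + M (j - 1))"
      using mult_le_mono1[OF R, of "1 + M (j - 1)"] by simp
    have m2: "R * (1 + M (j - 1)) \<le> M j" using h j by blast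
    have mono: "M (j - 1) \<le> M j" using m1 m2 by linarith
    have m3: "(j - 1) * M (j - 1) \<le> (j - 1) * M j" by (rule mult_le_mono2[OF mono])
    have m4: "(j - 1) * M j + M j = j * M j" using False by (cases j) auto
    have "(\<Sum>k\<in>{1..<Suc j}. M k) = (\<Sum>k\<in>{1..<j}. M k) + M j" using False by simp
    also have "\<dots> \<le> j * M j" using IH m3 m4 by linarith
    also have "\<dots> = (Suc j - 1) * M (Suc j - 1)" by simp
    finally show ?thesis .
  qed
qed

lemma chain_good:
  fixes M :: "nat \<Rightarrow> nat"
  assumes h: "\<forall>k\<in>{1..K}. M k \<ge> (E * K + c0 + 1) * (1 + M (k - 1))"
  shows "\<forall>j\<in>{1..K}. E * (\<Sum>k\<in>{1..<j}. M k) + c0 < M j"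
proof
  fix j assume j: "j \<in> {1..K}"
  have "(\<Sum>k\<in>{1..<j}. M k) \<le> (j - 1) * M (j - 1)"
    using chain_sum[of "E * K + c0 + 1" K M j] h j by auto
  also have "\<dots> \<le> K * M (j - 1)" using j by (intro mult_le_mono1) auto
  finally have "E * (\<Sum>k\<in>{1..<j}. M k) \<le> E * K * M (j - 1)" by (simp add: mult.assoc)
  moreover have "E * K * M (j - 1) + c0 < (E * K + c0 + 1) * (1 + M (j - 1))"
    by (simp add: algebra_simps)
  moreover have "(E * K + c0 + 1) * (1 + M (j - 1)) \<le> M j" using h j by blast
  ultimately show "E * (\<Sum>k\<in>{1..<j}. M k) + c0 < M j" by linarith
qed

lemma log_pow_small:
  fixes \<kappa> \<eta> y :: real
  assumes k: "0 < \<kappa>" "\<kappa> < 1" and eta: "\<eta> > 0"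
    and y: "y \<ge> 2 powr ((1/\<eta>) powr (1/(1-\<kappa>)))"
  shows "log 2 y powr \<kappa> \<le> \<eta> * log 2 y"
proof -
  define z0 where "z0 = (1/\<eta>) powr (1/(1-\<kappa>))"
  have z0: "z0 > 0" unfolding z0_def using eta by simp
  have ypos: "y > 0" using y by (smt (verit) powr_gt_zero)
  have "log 2 (2 powr z0) \<le> log 2 y" using y ypos unfolding z0_def by (subst log_le_cancel_iff) auto
  hence z: "log 2 y \<ge> z0" by simp
  define z where "z = log 2 y"
  have zp: "z > 0" using z z0 unfolding z_def by simp
  have "z0 powr (1 - \<kappa>) = 1/\<eta>" unfolding z0_def using k eta by (simp add: powr_powr)
  moreover have "z0 powr (1 - \<kappa>) \<le> z powr (1 - \<kappa>)" using z z0 k unfolding z_def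
    by (intro powr_mono2) auto
  ultimately have h0: "\<eta> * z0 powr (1 - \<kappa>) = 1" "z0 powr (1 - \<kappa>) \<le> z powr (1 - \<kappa>)"
    using eta by auto
  have "\<eta> * z0 powr (1 - \<kappa>) \<le> \<eta> * z powr (1 - \<kappa>)"
    using h0(2) eta by (intro mult_left_mono) auto
  hence h: "1 \<le> \<eta> * z powr (1 - \<kappa>)" using h0(1) by simp
  have "z powr \<kappa> = z powr \<kappa> * 1" by simp
  also have "\<dots> \<le> z powr \<kappa> * (\<eta> * z powr (1 - \<kappa>))" using h by (intro mult_left_mono) auto
  also have "\<dots> = \<eta> * (z powr \<kappa> * z powr (1 - \<kappa>))" by simp
  also have "z powr \<kappa> * z powr (1 - \<kappa>) = z" using zp by (simp add: powr_add[symmetric])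
  finally show ?thesis unfolding z_def .
qed

lemma tbound:
  fixes \<epsilon> \<theta> X sn an bn nr L :: real
  assumes e: "\<epsilon> > 0" and th: "\<theta> = \<epsilon> / (4 * (1 + \<epsilon>))" and nr: "nr \<ge> 1"
    and sn: "sn \<ge> nr powr (1 + \<epsilon>)" and bn: "\<bar>bn\<bar> \<le> 2 powr L"
    and an: "sn * 2 powr (- L) \<le> \<bar>an\<bar>" and L: "L \<le> \<theta> / 2 * log 2 sn"
    and X: "1 \<le> X" "X \<le> sn"
  shows "\<bar>bn / an\<bar> \<le> X powr (-\<theta>) * nr powr (-(1 + \<epsilon>/2))"
proof -
  have th0: "0 < \<theta>" "\<theta> < 1/4" using e unfolding th by (auto simp: field_simps)
  have "nr powr (1 + \<epsilon>) \<ge> 1" using nr e by (simp add: ge_one_powr_ge_zero)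
  hence sn1: "sn \<ge> 1" using sn by linarith
  have lam: "2 powr L \<le> sn powr (\<theta>/2)"
  proof -
    have "2 powr L \<le> 2 powr (\<theta> / 2 * log 2 sn)" using L by simp
    also have "\<dots> = (2 powr (log 2 sn)) powr (\<theta>/2)" by (simp add: powr_powr mult.commute)
    also have "\<dots> = sn powr (\<theta>/2)" using sn1 by simp
    finally show ?thesis .
  qed
  have sp: "sn powr (\<theta>/2) > 0" using sn1 by simp
  have "sn * 2 powr (- L) = sn / 2 powr L" by (simp add: powr_minus divide_inverse)
  also have "\<dots> \<ge> sn / sn powr (\<theta>/2)" using lam sn1 by (intro divide_left_mono) auto
  finally have an2: "\<bar>an\<bar> \<ge> sn / sn powr (\<theta>/2)" using an by linarith
  have anp: "sn / sn powr (\<theta>/2) > 0" using sn1 sp by simp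
  have "\<bar>bn / an\<bar> = \<bar>bn\<bar> / \<bar>an\<bar>" by simp
  also have "\<dots> \<le> sn powr (\<theta>/2) / (sn / sn powr (\<theta>/2))"
    using bn lam an2 anp by (intro frac_le) auto
  also have "\<dots> = sn powr (-\<theta>) * sn powr (2*\<theta> - 1)"
  proof -
    have "sn powr (\<theta>/2) / (sn / sn powr (\<theta>/2)) = sn powr (\<theta>/2) * sn powr (\<theta>/2) / sn"
      by simp
    also have "\<dots> = sn powr \<theta> / sn" by (simp add: powr_add[symmetric])
    also have "\<dots> = sn powr (\<theta>/2 + \<theta>/2 - 1)" using sn1 by (simp add: powr_diff)
    also have "\<dots> = sn powr (-\<theta> + (2*\<theta> - 1))" by (simp add: algebra_simps)
    also have "\<dots> = sn powr (-\<theta>) * sn powr (2*\<theta> - 1)" by (rule powr_add)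
    finally show ?thesis .
  qed
  also have "\<dots> \<le> X powr (-\<theta>) * (nr powr (1 + \<epsilon>)) powr (2*\<theta> - 1)"
  proof (intro mult_mono)
    show "sn powr - \<theta> \<le> X powr - \<theta>" using X th0 by (intro powr_mono2') auto
    show "sn powr (2 * \<theta> - 1) \<le> (nr powr (1 + \<epsilon>)) powr (2 * \<theta> - 1)"
      using sn th0 nr by (intro powr_mono2') auto
  qed auto
  also have "(nr powr (1 + \<epsilon>)) powr (2*\<theta> - 1) = nr powr (-(1 + \<epsilon>/2))"
  proof -
    have "(1 + \<epsilon>) * (2*\<theta> - 1) = -(1 + \<epsilon>/2)" unfolding th using e by (simp add: field_simps)
    thus ?thesis by (simp add: powr_powr)
  qed
  finally show ?thesis .
qed

lemma lna_bound:
  fixes sn an L \<theta> Ap :: real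
  assumes sn: "sn \<ge> 1" and th: "\<theta> > 0"
    and an: "\<bar>an\<bar> \<le> max (sn * 2 powr L) (2 powr Ap)" and an1: "\<bar>an\<bar> \<ge> 1"
    and L: "L \<le> \<theta> / 2 * log 2 sn" and L0: "L \<ge> 0" and Ap: "Ap \<ge> 0"
  shows "ln \<bar>an\<bar> \<le> (1 + \<theta>/2) * ln sn + Ap * ln 2"
proof -
  have lam: "2 powr L \<le> sn powr (\<theta>/2)"
  proof -
    have "2 powr L \<le> 2 powr (\<theta> / 2 * log 2 sn)" using L by simp
    also have "\<dots> = (2 powr (log 2 sn)) powr (\<theta>/2)" by (simp add: powr_powr mult.commute)
    also have "\<dots> = sn powr (\<theta>/2)" using sn by simp
    finally show ?thesis .
  qed
  have l1: "2 powr L \<ge> 1" using L0 by (intro ge_one_powr_ge_zero) auto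
  have a1: "2 powr Ap \<ge> 1" using Ap by (intro ge_one_powr_ge_zero) auto
  have "max (sn * 2 powr L) (2 powr Ap) \<le> sn * 2 powr L * 2 powr Ap"
    using sn l1 a1 by (smt (verit) mult_le_cancel_left1 mult_le_cancel_right1 one_le_mult_iff)
  also have "\<dots> \<le> sn * sn powr (\<theta>/2) * 2 powr Ap" using lam sn a1 by (intro mult_mono) auto
  finally have "\<bar>an\<bar> \<le> sn * sn powr (\<theta>/2) * 2 powr Ap" using an by linarith
  hence "ln \<bar>an\<bar> \<le> ln (sn * sn powr (\<theta>/2) * 2 powr Ap)" using an1 by (subst ln_le_cancel_iff) auto
  also have "\<dots> = ln sn + (\<theta>/2) * ln sn + Ap * ln 2" using sn by (simp add: ln_mult ln_powr)
  finally show ?thesis by (simp add: algebra_simps)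
qed

lemma freq_from_limsup:
  fixes f :: "nat \<Rightarrow> real"
  assumes "limsup (\<lambda>n. ereal (f n)) = \<infinity>"
  shows "\<exists>n\<ge>N. f n > M"
proof (rule ccontr)
  assume "\<not> (\<exists>n\<ge>N. f n > M)"
  hence h: "\<forall>n\<ge>N. f n \<le> M" by auto
  have "ereal M \<ge> limsup (\<lambda>n. ereal (f n))"
    unfolding Limsup_le_iff
  proof (intro allI impI)
    fix y :: ereal assume y: "y > ereal M"
    show "eventually (\<lambda>n. y > ereal (f n)) sequentially"
      using h y unfolding eventually_sequentially
      by (metis ereal_less_eq(3) order_le_less_trans)
  qed
  thus False using assms by simp
qed

lemma s_mono_gen:
  fixes s :: "nat \<Rightarrow> int"
  assumes "\<forall>n\<ge>1. s n \<le> s (Suc n)"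
  shows "1 \<le> n \<Longrightarrow> n \<le> m \<Longrightarrow> s n \<le> s m"
proof (induction m)
  case 0 then show ?case by simp
next
  case (Suc m)
  show ?case
  proof (cases "n = Suc m")
    case True then show ?thesis by simp
  next
    case False
    hence "n \<le> m" using Suc.prems by simp
    hence "s n \<le> s m" using Suc by simp
    moreover have "s m \<le> s (Suc m)" using assms \<open>n \<le> m\<close> Suc.prems by simp
    ultimately show ?thesis by simp
  qed
qed

lemma record_index:
  fixes g :: "nat \<Rightarrow> real"
  assumes fr': "\<forall>M N. \<exists>n\<ge>N. g n > M"
  shows "\<exists>N\<ge>N0. N \<ge> n1 \<and> g (Suc N) > G \<and> (\<forall>n\<in>{n1..N}. g n \<le> g (Suc N))"
proof -
  define m0 where "m0 = N0 + n1"
  define G' where "G' = max G (Max (g ` {n1..m0}))"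
  obtain n2 where n2: "n2 \<ge> Suc m0" "g n2 > G'" using fr' by blast
  obtain m where m: "m \<in> {n1..n2}" "\<forall>n\<in>{n1..n2}. g n \<le> g m"
  proof -
    have "Max (g ` {n1..n2}) \<in> g ` {n1..n2}" using n2 by (intro Max_in) (auto simp: m0_def)
    then obtain m where "m \<in> {n1..n2}" "g m = Max (g ` {n1..n2})" by auto
    moreover have "\<forall>n\<in>{n1..n2}. g n \<le> Max (g ` {n1..n2})" by auto
    ultimately show ?thesis using that by auto
  qed
  have gm: "g m > G'" using m n2 by (meson atLeastAtMost_iff le_trans less_le_trans m0_def n2 order_refl le_add2 Suc_leD)
  have "m > m0"
  proof (rule ccontr)
    assume "\<not> m > m0"
    hence "m \<in> {n1..m0}" using m by auto
    hence "g m \<le> Max (g ` {n1..m0})" by auto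
    thus False using gm unfolding G'_def by auto
  qed
  then obtain N where N: "m = Suc N" by (cases m) auto
  have "N \<ge> N0" "N \<ge> n1" using \<open>m > m0\<close> N unfolding m0_def by auto
  moreover have "g (Suc N) > G" using gm N unfolding G'_def by auto
  moreover have "\<forall>n\<in>{n1..N}. g n \<le> g (Suc N)" using m N by auto
  ultimately show ?thesis by blast
qed

lemma analytic:
  fixes K :: nat and \<epsilon> \<kappa> :: real and a b :: "nat \<Rightarrow> nat \<Rightarrow> int" and s :: "nat \<Rightarrow> int"
    and A0 :: int and E :: nat and Lf :: real
  assumes kappa: "0 < \<kappa>" "\<kappa> < 1" and eps_pos: "\<epsilon> > 0"
    and nonzero: "\<forall>k\<in>{1..K}. \<forall>n\<ge>1. a k n \<noteq> 0"
    and s_pos: "\<forall>n\<ge>1. s n > 0" and s_mono: "\<forall>n\<ge>1. s n \<le> s (Suc n)"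
    and growth: "\<forall>k\<in>{1..K}. \<forall>A::int. A \<ge> A0 \<longrightarrow> (\<forall>\<^sub>F n in sequentially.
          real n powr (1 + \<epsilon>) \<le> real_of_int (s n) \<and> s n \<le> s (Suc n) \<and>
          \<bar>real_of_int (b k n)\<bar> \<le> 2 powr (log 2 (real_of_int (s n)) powr \<kappa>) \<and>
          real_of_int (s n) * 2 powr (- (log 2 (real_of_int (s n)) powr \<kappa>))
            \<le> \<bar>real_of_int (a k n)\<bar> \<and>
          \<bar>real_of_int (a k n)\<bar> \<le> max (real_of_int (s n) * 2 powr (log 2 (real_of_int (s n)) powr \<kappa>))
                                       (2 powr (real_of_int A ^ n)))"
    and limsup_inf: "\<forall>A::int. A \<ge> A0 \<longrightarrow>
          limsup (\<lambda>n. ereal (real_of_int (s n) powr (1 / real_of_int A ^ n))) = \<infinity>"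
    and Lf: "Lf \<ge> 0" and K_pos: "K \<ge> 1"
  shows "(\<forall>k\<in>{1..K}. summable (\<lambda>n. \<bar>real_of_int (b k (Suc n)) / real_of_int (a k (Suc n))\<bar>)) \<and>
         (\<forall>N0. \<exists>N\<ge>N0. (\<Prod>k\<in>{1..K}. \<bar>real_of_int (\<Prod>n\<in>{1..N}. a k n)\<bar>) ^ E * Lf *
            (\<Sum>k\<in>{1..K}. \<Sum>n. \<bar>real_of_int (b k (Suc (n + N))) / real_of_int (a k (Suc (n + N)))\<bar>) < 1)"
proof -
  define \<theta> where "\<theta> = \<epsilon> / (4 * (1 + \<epsilon>))"
  define \<rho> where "\<rho> = 1 + \<epsilon>/2"
  have th0: "0 < \<theta>" "\<theta> < 1/4" using eps_pos unfolding \<theta>_def by (auto simp: field_simps)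
  define \<eta> where "\<eta> = \<theta>/2"
  have eta: "\<eta> > 0" unfolding \<eta>_def using th0 by simp
  define Y0 where "Y0 = 2 powr ((1/\<eta>) powr (1/(1-\<kappa>)))"
  define A :: int where "A = max A0 (max 2 \<lceil>1 + 6 * real K * real E / \<theta>\<rceil>)"
  define Ar where "Ar = real_of_int A"
  have AA0: "A \<ge> A0" unfolding A_def by simp
  have Ar2: "Ar \<ge> 2" unfolding Ar_def A_def by linarith
  have Ar3: "Ar - 1 \<ge> 6 * real K * real E / \<theta>" unfolding Ar_def A_def by linarith
  have AKE: "3 * real K * real E / (Ar - 1) \<le> \<theta>/2"
  proof -
    have "6 * real K * real E \<le> \<theta> * (Ar - 1)" using Ar3 th0 by (simp add: field_simps)
    thus ?thesis using Ar2 by (simp add: field_simps)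
  qed
  obtain c :: nat where c: "Y0 \<le> real c" using real_arch_simple by blast
  have ev: "\<forall>\<^sub>F n in sequentially. (\<forall>k\<in>{1..K}.
          real n powr (1 + \<epsilon>) \<le> real_of_int (s n) \<and> s n \<le> s (Suc n) \<and>
          \<bar>real_of_int (b k n)\<bar> \<le> 2 powr (log 2 (real_of_int (s n)) powr \<kappa>) \<and>
          real_of_int (s n) * 2 powr (- (log 2 (real_of_int (s n)) powr \<kappa>))
            \<le> \<bar>real_of_int (a k n)\<bar> \<and>
          \<bar>real_of_int (a k n)\<bar> \<le> max (real_of_int (s n) * 2 powr (log 2 (real_of_int (s n)) powr \<kappa>))
                                       (2 powr (Ar ^ n))) \<and> n \<ge> max 1 c"
    unfolding Ar_def using growth AA0
    by (intro eventually_conj eventually_ball_finite eventually_ge_at_top) auto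
  then obtain n1 where n1: "\<forall>n\<ge>n1. (\<forall>k\<in>{1..K}.
          real n powr (1 + \<epsilon>) \<le> real_of_int (s n) \<and> s n \<le> s (Suc n) \<and>
          \<bar>real_of_int (b k n)\<bar> \<le> 2 powr (log 2 (real_of_int (s n)) powr \<kappa>) \<and>
          real_of_int (s n) * 2 powr (- (log 2 (real_of_int (s n)) powr \<kappa>))
            \<le> \<bar>real_of_int (a k n)\<bar> \<and>
          \<bar>real_of_int (a k n)\<bar> \<le> max (real_of_int (s n) * 2 powr (log 2 (real_of_int (s n)) powr \<kappa>))
                                       (2 powr (Ar ^ n))) \<and> n \<ge> max 1 c"
    unfolding eventually_sequentially by blast
  have sn1: "real_of_int (s n) \<ge> 1" if "n \<ge> 1" for n using s_pos that by force
  have hs: "real n powr (1 + \<epsilon>) \<le> real_of_int (s n)" if "n \<ge> n1" for n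
  proof -
    have "1 \<in> {1..K}" using K_pos by simp
    thus ?thesis using n1 that by blast
  qed
  have n1ge: "n \<ge> 1" "real n \<ge> Y0" if "n \<ge> n1" for n using n1 that c by auto
  have Lsmall: "log 2 (real_of_int (s n)) powr \<kappa> \<le> \<theta> / 2 * log 2 (real_of_int (s n))"
    if n: "n \<ge> n1" for n
  proof -
    have n1': "n \<ge> 1" "real n \<ge> Y0" using n1ge n by auto
    have "real n powr (1 + \<epsilon>) \<le> real_of_int (s n)" using hs n by auto
    moreover have "real n powr 1 \<le> real n powr (1 + \<epsilon>)" using n1' eps_pos by (intro powr_mono) auto
    ultimately have "real_of_int (s n) \<ge> Y0" using n1' by simp
    thus ?thesis unfolding \<eta>_def[symmetric] using log_pow_small[OF kappa eta] unfolding Y0_def by blast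
  qed
  have KB: "\<bar>real_of_int (b k n) / real_of_int (a k n)\<bar> \<le> X powr (-\<theta>) * real n powr (-\<rho>)"
    if k: "k \<in> {1..K}" and n: "n \<ge> n1" and X: "1 \<le> X" "X \<le> real_of_int (s n)" for k n X
  proof -
    have g: "\<bar>real_of_int (b k n)\<bar> \<le> 2 powr (log 2 (real_of_int (s n)) powr \<kappa>)"
       "real_of_int (s n) * 2 powr (- (log 2 (real_of_int (s n)) powr \<kappa>)) \<le> \<bar>real_of_int (a k n)\<bar>"
      using n1 n k by blast+
    show ?thesis unfolding \<rho>_def
      by (rule tbound[OF eps_pos \<theta>_def _ hs[OF n] g Lsmall[OF n] X]) (use n1ge[OF n] in auto)
  qed
  define f where "f m = real (Suc m) powr (-\<rho>)" for m
  have sumf: "summable f"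
  proof -
    have "summable (\<lambda>n. real n powr (-\<rho>))" unfolding \<rho>_def using eps_pos
      by (subst summable_real_powr_iff) auto
    thus ?thesis unfolding f_def by (subst summable_Suc_iff)
  qed
  have f0: "f m \<ge> 0" for m unfolding f_def by simp
  have fmono: "f (m + N) \<le> f m" for m N
    unfolding f_def \<rho>_def using eps_pos by (intro powr_mono2') auto
  define Z where "Z = suminf f"
  have Z0: "Z \<ge> 0" unfolding Z_def using sumf f0 by (intro suminf_nonneg) auto
  have part1: "\<forall>k\<in>{1..K}. summable (\<lambda>n. \<bar>real_of_int (b k (Suc n)) / real_of_int (a k (Suc n))\<bar>)"
  proof
    fix k assume k: "k \<in> {1..K}"
    show "summable (\<lambda>n. \<bar>real_of_int (b k (Suc n)) / real_of_int (a k (Suc n))\<bar>)"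
    proof (rule summable_comparison_test_ev[OF _ sumf])
      show "\<forall>\<^sub>F n in sequentially. norm \<bar>real_of_int (b k (Suc n)) / real_of_int (a k (Suc n))\<bar> \<le> f n"
        unfolding eventually_sequentially
      proof (intro exI allI impI)
        fix n assume n: "n \<ge> n1"
        have "\<bar>real_of_int (b k (Suc n)) / real_of_int (a k (Suc n))\<bar> \<le> 1 powr (-\<theta>) * real (Suc n) powr (-\<rho>)"
          using n sn1[of "Suc n"] by (intro KB[OF k]) auto
        thus "norm \<bar>real_of_int (b k (Suc n)) / real_of_int (a k (Suc n))\<bar> \<le> f n" unfolding f_def by simp
      qed
    qed
  qed
  have part2: "\<exists>N\<ge>N0. (\<Prod>k\<in>{1..K}. \<bar>real_of_int (\<Prod>n\<in>{1..N}. a k n)\<bar>) ^ E * Lf *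
            (\<Sum>k\<in>{1..K}. \<Sum>n. \<bar>real_of_int (b k (Suc (n + N))) / real_of_int (a k (Suc (n + N)))\<bar>) < 1" for N0
  proof -
    define g where "g n = ln (real_of_int (s n)) / Ar ^ n" for n
    define Cst where "Cst = (\<Sum>k\<in>{1..K}. \<Sum>n\<in>{1..<n1}. ln \<bar>real_of_int (a k n)\<bar>)"
    define W0 where "W0 = exp (real E * Cst) * Lf * (real K * Z)"
    have W0: "W0 \<ge> 0" unfolding W0_def using Lf Z0 by simp
    define G where "G = max (ln 2) (2 / \<theta> * ln (W0 + 1))"
    have fr: "\<forall>M N. \<exists>n\<ge>N. g n > M"
    proof (intro allI)
      fix M :: real and N :: nat
      have ls: "limsup (\<lambda>n. ereal (real_of_int (s n) powr (1 / Ar ^ n))) = \<infinity>"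
        using limsup_inf AA0 unfolding Ar_def by blast
      obtain n where n: "n \<ge> max N 1" "real_of_int (s n) powr (1 / Ar ^ n) > exp M"
        using freq_from_limsup[OF ls] by blast
      have "real_of_int (s n) powr (1 / Ar ^ n) = exp (g n)"
        using sn1[of n] n unfolding g_def by (simp add: powr_def)
      thus "\<exists>n\<ge>N. g n > M" using n by auto
    qed
    obtain N where N: "N \<ge> N0" "N \<ge> n1" "g (Suc N) > G" "\<forall>n\<in>{n1..N}. g n \<le> g (Suc N)"
      using record_index[OF fr] by blast
    define X where "X = real_of_int (s (Suc N))"
    have X1: "X \<ge> 1" unfolding X_def using sn1 by simp
    define gX where "gX = g (Suc N)"
    have ln2: "ln (2::real) > 0" by simp
    have gX: "gX > G" "gX \<ge> ln 2" using N unfolding gX_def G_def by auto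
    have gX0: "gX > 0" using gX(2) ln2 by linarith
    have lnX: "ln X = gX * Ar ^ Suc N" unfolding X_def gX_def g_def using Ar2 by simp
    have ArN: "Ar ^ Suc N \<ge> 1" using Ar2 by (intro one_le_power) simp
    have lnX2: "ln X \<ge> gX" unfolding lnX using gX0 ArN by (simp add: mult_le_cancel_left1)
    have tail: "(\<Sum>n. \<bar>real_of_int (b k (Suc (n + N))) / real_of_int (a k (Suc (n + N)))\<bar>) \<le> X powr (-\<theta>) * Z"
      if k: "k \<in> {1..K}" for k
    proof -
      have "(\<Sum>n. \<bar>real_of_int (b k (Suc (n + N))) / real_of_int (a k (Suc (n + N)))\<bar>) \<le> (\<Sum>n. X powr (-\<theta>) * f n)"
      proof (rule suminf_le)
        fix n
        have "X \<le> real_of_int (s (Suc (n + N)))" unfolding X_def using s_mono_gen[OF s_mono, of "Suc N" "Suc (n + N)"] by simp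
        hence "\<bar>real_of_int (b k (Suc (n + N))) / real_of_int (a k (Suc (n + N)))\<bar> \<le> X powr (-\<theta>) * real (Suc (n + N)) powr (-\<rho>)"
          using N X1 by (intro KB[OF k]) auto
        also have "\<dots> \<le> X powr (-\<theta>) * f n" using fmono[of n N] unfolding f_def by (intro mult_left_mono) (auto simp: add.commute)
        finally show "\<bar>real_of_int (b k (Suc (n + N))) / real_of_int (a k (Suc (n + N)))\<bar> \<le> X powr (-\<theta>) * f n" .
      next
        show "summable (\<lambda>n. \<bar>real_of_int (b k (Suc (n + N))) / real_of_int (a k (Suc (n + N)))\<bar>)"
          using summable_ignore_initial_segment[OF part1[rule_format, OF k], of N] by simp
        show "summable (\<lambda>n. X powr (-\<theta>) * f n)" using sumf by (rule summable_mult)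
      qed
      also have "\<dots> = X powr (-\<theta>) * Z" unfolding Z_def using sumf by (rule suminf_mult)
      finally show ?thesis .
    qed
    have tailsum: "(\<Sum>k\<in>{1..K}. \<Sum>n. \<bar>real_of_int (b k (Suc (n + N))) / real_of_int (a k (Suc (n + N)))\<bar>)
        \<le> real K * (X powr (-\<theta>) * Z)"
    proof -
      have "(\<Sum>k\<in>{1..K}. \<Sum>n. \<bar>real_of_int (b k (Suc (n + N))) / real_of_int (a k (Suc (n + N)))\<bar>)
          \<le> (\<Sum>k\<in>{1..K}. X powr (-\<theta>) * Z)" using tail by (intro sum_mono) auto
      thus ?thesis by simp
    qed
    have Dk: "ln \<bar>real_of_int (\<Prod>n\<in>{1..N}. a k n)\<bar> \<le> (\<Sum>n\<in>{1..<n1}. ln \<bar>real_of_int (a k n)\<bar>) + 3 * ln X / (Ar - 1)"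
      if k: "k \<in> {1..K}" for k
    proof -
      have nz: "\<forall>n\<in>{1..N}. \<bar>real_of_int (a k n)\<bar> \<noteq> 0" using nonzero k by auto
      have "ln \<bar>real_of_int (\<Prod>n\<in>{1..N}. a k n)\<bar> = ln (\<Prod>n\<in>{1..N}. \<bar>real_of_int (a k n)\<bar>)"
        by (simp add: abs_prod)
      also have "\<dots> = (\<Sum>n\<in>{1..N}. ln \<bar>real_of_int (a k n)\<bar>)" using nz by (intro ln_prod) auto
      also have "\<dots> = (\<Sum>n\<in>{1..<n1}. ln \<bar>real_of_int (a k n)\<bar>) + (\<Sum>n\<in>{n1..N}. ln \<bar>real_of_int (a k n)\<bar>)"
      proof -
        have "n1 \<ge> 1" using n1ge[of n1] by simp
        hence e: "{1..N} = {1..<n1} \<union> {n1..N}" using N by auto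
        show ?thesis unfolding e by (rule sum.union_disjoint) auto
      qed
      also have "(\<Sum>n\<in>{n1..N}. ln \<bar>real_of_int (a k n)\<bar>) \<le> (\<Sum>n\<in>{n1..N}. 3 * gX * Ar ^ n)"
      proof (rule sum_mono)
        fix n assume n: "n \<in> {n1..N}"
        have nn1: "n \<ge> n1" using n by simp
        have bnd: "\<bar>real_of_int (a k n)\<bar> \<le> max (real_of_int (s n) * 2 powr (log 2 (real_of_int (s n)) powr \<kappa>)) (2 powr (Ar ^ n))"
          using n1 nn1 k by blast
        have a1: "\<bar>real_of_int (a k n)\<bar> \<ge> 1" using nonzero k n1ge[OF nn1] by (simp add: Ints_nonzero_abs_ge1)
        have Arn: "Ar ^ n \<ge> 0" using Ar2 by simp
        have "ln \<bar>real_of_int (a k n)\<bar> \<le> (1 + \<theta>/2) * ln (real_of_int (s n)) + Ar ^ n * ln 2"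
          by (rule lna_bound[OF sn1[OF n1ge(1)[OF nn1]] th0(1) bnd a1 Lsmall[OF nn1] _ Arn]) simp
        also have "ln (real_of_int (s n)) = g n * Ar ^ n" unfolding g_def using Ar2 by simp
        also have "g n \<le> gX" using N n unfolding gX_def by auto
        hence "(1 + \<theta>/2) * (g n * Ar ^ n) \<le> (1 + \<theta>/2) * (gX * Ar ^ n)"
          using th0 Arn by (intro mult_left_mono mult_right_mono) auto
        hence "(1 + \<theta>/2) * (g n * Ar ^ n) + Ar ^ n * ln 2 \<le> (1 + \<theta>/2) * (gX * Ar ^ n) + Ar ^ n * gX"
          using gX(2) Arn by (smt (verit) mult_left_mono)
        also have "\<dots> \<le> 3 * gX * Ar ^ n"
        proof -
          have "(1 + \<theta>/2) * (gX * Ar ^ n) \<le> 2 * (gX * Ar ^ n)" using th0 gX0 Arn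
            by (intro mult_right_mono) auto
          thus ?thesis by (simp add: algebra_simps)
        qed
        finally show "ln \<bar>real_of_int (a k n)\<bar> \<le> 3 * gX * Ar ^ n" .
      qed
      also have "(\<Sum>n\<in>{n1..N}. 3 * gX * Ar ^ n) \<le> (\<Sum>n<Suc N. 3 * gX * Ar ^ n)"
        using gX0 Ar2 by (intro sum_mono2) auto
      also have "\<dots> = 3 * gX * ((Ar ^ Suc N - 1) / (Ar - 1))"
        using Ar2 by (simp add: sum_distrib_left[symmetric] sum_gp_strict field_simps)
      also have "\<dots> \<le> 3 * gX * (Ar ^ Suc N / (Ar - 1))"
        using gX0 Ar2 by (intro mult_left_mono divide_right_mono) auto
      also have "\<dots> = 3 * ln X / (Ar - 1)" unfolding lnX by simp
      finally show ?thesis by simp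
    qed
    define P where "P = (\<Prod>k\<in>{1..K}. \<bar>real_of_int (\<Prod>n\<in>{1..N}. a k n)\<bar>)"
    have Pk: "\<bar>real_of_int (\<Prod>n\<in>{1..N}. a k n)\<bar> \<noteq> 0" if k: "k \<in> {1..K}" for k
      using nonzero k by auto
    have P0: "P > 0" unfolding P_def using Pk by (intro prod_pos) auto
    have lnP: "ln P = (\<Sum>k\<in>{1..K}. ln \<bar>real_of_int (\<Prod>n\<in>{1..N}. a k n)\<bar>)"
      unfolding P_def using Pk by (intro ln_prod) auto
    have lnX0: "ln X \<ge> 0" using X1 by simp
    have "ln P \<le> (\<Sum>k\<in>{1..K}. (\<Sum>n\<in>{1..<n1}. ln \<bar>real_of_int (a k n)\<bar>) + 3 * ln X / (Ar - 1))"
      unfolding lnP using Dk by (intro sum_mono) auto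
    also have "\<dots> = Cst + real K * (3 * ln X / (Ar - 1))" unfolding Cst_def by (simp add: sum.distrib)
    finally have lnP2: "ln P \<le> Cst + real K * (3 * ln X / (Ar - 1))" .
    have "real E * ln P \<le> real E * (Cst + real K * (3 * ln X / (Ar - 1)))"
      using lnP2 by (intro mult_left_mono) auto
    also have "\<dots> = real E * Cst + (3 * real K * real E / (Ar - 1)) * ln X" by (simp add: algebra_simps)
    also have "\<dots> \<le> real E * Cst + (\<theta>/2) * ln X" using AKE lnX0 by (intro add_left_mono mult_right_mono) auto
    finally have ElnP: "real E * ln P \<le> real E * Cst + (\<theta>/2) * ln X" .
    have PE: "P ^ E = exp (real E * ln P)" using P0 by (simp add: exp_of_nat_mult)
    have PE2: "P ^ E \<le> exp (real E * Cst + (\<theta>/2) * ln X)" unfolding PE using ElnP by simp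
    have Xp: "X powr (-\<theta>) = exp (-\<theta> * ln X)" using X1 by (simp add: powr_def)
    define u where "u = (\<theta>/2) * ln X"
    have u: "u > ln (W0 + 1)"
    proof -
      have "(\<theta>/2) * G \<ge> (\<theta>/2) * (2 / \<theta> * ln (W0 + 1))" unfolding G_def using th0 by (intro mult_left_mono) auto
      hence "(\<theta>/2) * G \<ge> ln (W0 + 1)" using th0 by simp
      moreover have "(\<theta>/2) * gX > (\<theta>/2) * G" using gX th0 by simp
      moreover have "(\<theta>/2) * ln X \<ge> (\<theta>/2) * gX" using lnX2 th0 by (intro mult_left_mono) auto
      ultimately show ?thesis unfolding u_def by linarith
    qed
    have eu: "exp u > W0 + 1"
    proof -
      have "exp (ln (W0 + 1)) < exp u" using u by simp
      thus ?thesis using W0 by simp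
    qed
    have T0: "0 \<le> (\<Sum>k\<in>{1..K}. \<Sum>n. \<bar>real_of_int (b k (Suc (n + N))) / real_of_int (a k (Suc (n + N)))\<bar>)"
    proof (intro sum_nonneg suminf_nonneg)
      fix k assume k: "k \<in> {1..K}"
      show "summable (\<lambda>n. \<bar>real_of_int (b k (Suc (n + N))) / real_of_int (a k (Suc (n + N)))\<bar>)"
        using summable_ignore_initial_segment[OF part1[rule_format, OF k], of N] by simp
    qed auto
    have "P ^ E * Lf * (\<Sum>k\<in>{1..K}. \<Sum>n. \<bar>real_of_int (b k (Suc (n + N))) / real_of_int (a k (Suc (n + N)))\<bar>)
        \<le> exp (real E * Cst + (\<theta>/2) * ln X) * Lf * (real K * (X powr (-\<theta>) * Z))"
      using PE2 tailsum Lf T0 P0 by (intro mult_mono) auto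
    also have "\<dots> = W0 * exp (u - 2 * u)"
      unfolding W0_def u_def Xp by (simp add: exp_add[symmetric] exp_diff algebra_simps)
    also have "\<dots> = W0 / exp u" by (simp add: exp_minus divide_inverse)
    also have "\<dots> < 1" using eu W0 by (simp add: divide_less_eq)
    finally show ?thesis using N unfolding P_def by blast
  qed
  show ?thesis using part1 part2 by blast
qed

lemma Sr_eq:
  fixes a b :: "nat \<Rightarrow> int"
  assumes nz: "\<forall>n\<in>{1..N}. a n \<noteq> 0"
  shows "real_of_int (\<Sum>n\<in>{1..N}. b n * (\<Prod>m\<in>{1..N}-{n}. a m)) =
         real_of_int (\<Prod>n\<in>{1..N}. a n) * (\<Sum>n<N. real_of_int (b (Suc n)) / real_of_int (a (Suc n)))"
proof -
  have "(\<Sum>n<N. real_of_int (b (Suc n)) / real_of_int (a (Suc n))) =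
        (\<Sum>n\<in>Suc ` {..<N}. real_of_int (b n) / real_of_int (a n))"
    by (subst sum.reindex) auto
  also have "Suc ` {..<N} = {1..N}" by (simp add: image_Suc_lessThan)
  finally have e: "(\<Sum>n<N. real_of_int (b (Suc n)) / real_of_int (a (Suc n))) =
       (\<Sum>n\<in>{1..N}. real_of_int (b n) / real_of_int (a n))" .
  have t: "real_of_int (\<Prod>m\<in>{1..N}. a m) * (real_of_int (b n) / real_of_int (a n)) =
           real_of_int (b n * (\<Prod>m\<in>{1..N}-{n}. a m))" if n: "n \<in> {1..N}" for n
  proof -
    have "(\<Prod>m\<in>{1..N}. a m) = a n * (\<Prod>m\<in>{1..N}-{n}. a m)" using n by (simp add: prod.remove)
    thus ?thesis using nz n by simp
  qed
  show ?thesis unfolding e sum_distrib_left using t by (simp add: of_int_sum)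
qed

lemma Q_real:
  fixes S :: "(nat \<Rightarrow> nat) set" and C :: "(nat \<Rightarrow> nat) \<Rightarrow> int" and T D :: "nat \<Rightarrow> int"
    and x :: "nat \<Rightarrow> real"
  assumes TD: "\<forall>k\<in>{1..K}. real_of_int (T k) = real_of_int (D k) * x k"
    and bd: "\<forall>e\<in>S. \<forall>k\<in>{1..K}. e k \<le> E"
  shows "real_of_int (\<Sum>e\<in>S. C e * (\<Prod>k\<in>{1..K}. T k ^ e k * D k ^ (E - e k))) =
         (\<Prod>k\<in>{1..K}. real_of_int (D k)) ^ E * (\<Sum>e\<in>S. real_of_int (C e) * (\<Prod>k\<in>{1..K}. x k ^ e k))"
proof -
  have pe: "real_of_int (\<Prod>k\<in>{1..K}. T k ^ e k * D k ^ (E - e k)) =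
        (\<Prod>k\<in>{1..K}. real_of_int (D k)) ^ E * (\<Prod>k\<in>{1..K}. x k ^ e k)" if e: "e \<in> S" for e
  proof -
    have "real_of_int (\<Prod>k\<in>{1..K}. T k ^ e k * D k ^ (E - e k)) =
          (\<Prod>k\<in>{1..K}. real_of_int (D k) ^ E * x k ^ e k)"
      unfolding of_int_prod
    proof (intro prod.cong refl)
      fix k assume k: "k \<in> {1..K}"
      have "real_of_int (T k ^ e k * D k ^ (E - e k)) = (real_of_int (D k) * x k) ^ e k * real_of_int (D k) ^ (E - e k)"
        using TD k by simp
      also have "\<dots> = real_of_int (D k) ^ (e k + (E - e k)) * x k ^ e k"
        by (simp add: power_mult_distrib power_add)
      also have "e k + (E - e k) = E" using bd e k by auto
      finally show "real_of_int (T k ^ e k * D k ^ (E - e k)) = real_of_int (D k) ^ E * x k ^ e k" .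
    qed
    also have "\<dots> = (\<Prod>k\<in>{1..K}. real_of_int (D k)) ^ E * (\<Prod>k\<in>{1..K}. x k ^ e k)"
      by (simp add: prod.distrib prod_power_distrib)
    finally show ?thesis .
  qed
  have "real_of_int (\<Sum>e\<in>S. C e * (\<Prod>k\<in>{1..K}. T k ^ e k * D k ^ (E - e k))) =
        (\<Sum>e\<in>S. real_of_int (C e) * ((\<Prod>k\<in>{1..K}. real_of_int (D k)) ^ E * (\<Prod>k\<in>{1..K}. x k ^ e k)))"
    unfolding of_int_sum of_int_mult using pe by (intro sum.cong) auto
  also have "\<dots> = (\<Prod>k\<in>{1..K}. real_of_int (D k)) ^ E * (\<Sum>e\<in>S. real_of_int (C e) * (\<Prod>k\<in>{1..K}. x k ^ e k))"
    by (simp add: sum_distrib_left algebra_simps)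
  finally show ?thesis .
qed

lemma maxval_ge:
  assumes "N \<ge> 1" "n \<in> {1..N}"
  shows "multiplicity (int p) (a n) \<le> maxval p a N"
  unfolding maxval_def using assms by (intro Max_ge) auto

lemma alg_part:
  fixes K p :: nat and a b :: "nat \<Rightarrow> nat \<Rightarrow> int" and S :: "(nat \<Rightarrow> nat) set"
    and C :: "(nat \<Rightarrow> nat) \<Rightarrow> int" and E c0 :: nat
  assumes p_prime: "prime p"
    and nonzero: "\<forall>k\<in>{1..K}. \<forall>n\<ge>1. a k n \<noteq> 0 \<and> b k n \<noteq> 0"
    and coprime_p: "\<forall>k\<in>{1..K}. \<forall>n\<ge>1. \<not> int p dvd gcd (a k n) (b k n)"
    and unique_max: "\<forall>k\<in>{1..K}. \<forall>\<^sub>F N in sequentially.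
          card {n\<in>{1..N}. multiplicity (int p) (a k n) = maxval p (a k) N} = 1"
    and ratio_lim: "\<forall>k\<in>{1..K}.
          filterlim (\<lambda>N. real (maxval p (a k) N) / (1 + real (maxval p (a (k - 1)) N)))
            at_top sequentially"
    and fin: "finite S" and ne: "S \<noteq> {}"
    and C: "\<forall>e\<in>S. C e \<noteq> 0 \<and> multiplicity (int p) (C e) \<le> c0"
    and supp: "\<forall>e\<in>S. \<forall>i. i \<notin> {1..K} \<longrightarrow> e i = 0"
    and bd: "\<forall>e\<in>S. \<forall>k\<in>{1..K}. e k \<le> E"
  shows "\<forall>\<^sub>F N in sequentially.
     (\<Sum>e\<in>S. C e * (\<Prod>k\<in>{1..K}. (\<Sum>n\<in>{1..N}. b k n * (\<Prod>m\<in>{1..N}-{n}. a k m)) ^ e k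
          * (\<Prod>n\<in>{1..N}. a k n) ^ (E - e k))) \<noteq> 0"
proof -
  define R :: nat where "R = E * K + c0 + 1"
  have ev: "\<forall>\<^sub>F N in sequentially. (\<forall>k\<in>{1..K}.
      real R \<le> real (maxval p (a k) N) / (1 + real (maxval p (a (k - 1)) N)) \<and>
      card {n\<in>{1..N}. multiplicity (int p) (a k n) = maxval p (a k) N} = 1) \<and> N \<ge> 1"
  proof (intro eventually_conj eventually_ball_finite ballI eventually_ge_at_top)
    fix k assume k: "k \<in> {1..K}"
    show "\<forall>\<^sub>F N in sequentially. real R \<le> real (maxval p (a k) N) / (1 + real (maxval p (a (k - 1)) N))"
      using ratio_lim k unfolding filterlim_at_top by blast
    show "\<forall>\<^sub>F N in sequentially. card {n\<in>{1..N}. multiplicity (int p) (a k n) = maxval p (a k) N} = 1"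
      using unique_max k by blast
  qed auto
  show ?thesis
  proof (rule eventually_mono[OF ev])
    fix N assume H: "(\<forall>k\<in>{1..K}.
      real R \<le> real (maxval p (a k) N) / (1 + real (maxval p (a (k - 1)) N)) \<and>
      card {n\<in>{1..N}. multiplicity (int p) (a k n) = maxval p (a k) N} = 1) \<and> N \<ge> 1"
    define M where "M k = maxval p (a k) N" for k
    have MR: "\<forall>k\<in>{1..K}. M k \<ge> R * (1 + M (k - 1))"
    proof
      fix k assume k: "k \<in> {1..K}"
      have "real R \<le> real (M k) / (1 + real (M (k - 1)))" using H k unfolding M_def by blast
      hence "real R * (1 + real (M (k - 1))) \<le> real (M k)" by (simp add: field_simps)
      hence "real (R * (1 + M (k - 1))) \<le> real (M k)" by (simp only: of_nat_mult of_nat_add of_nat_1)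
      thus "M k \<ge> R * (1 + M (k - 1))" by linarith
    qed
    have good: "\<forall>j\<in>{1..K}. E * (\<Sum>k\<in>{1..<j}. M k) + c0 < M j"
      by (rule chain_good) (use MR in \<open>simp add: R_def\<close>)
    have gp: "\<forall>e\<in>S. \<forall>e'\<in>S. e \<noteq> e' \<longrightarrow>
        (\<Sum>k\<in>{1..K}. e k * M k) + c0 < (\<Sum>k\<in>{1..K}. e' k * M k) \<or>
        (\<Sum>k\<in>{1..K}. e' k * M k) + c0 < (\<Sum>k\<in>{1..K}. e k * M k)"
    proof (intro ballI impI)
      fix e e' assume e: "e \<in> S" "e' \<in> S" "e \<noteq> e'"
      show "(\<Sum>k\<in>{1..K}. e k * M k) + c0 < (\<Sum>k\<in>{1..K}. e' k * M k) \<or>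
        (\<Sum>k\<in>{1..K}. e' k * M k) + c0 < (\<Sum>k\<in>{1..K}. e k * M k)"
        by (rule gap[of K e e' E M c0]) (use e supp bd good in auto)
    qed
    have TD: "(\<Sum>n\<in>{1..N}. b k n * (\<Prod>m\<in>{1..N}-{n}. a k m)) \<noteq> 0 \<and> (\<Prod>n\<in>{1..N}. a k n) \<noteq> 0 \<and>
        multiplicity (int p) (\<Sum>n\<in>{1..N}. b k n * (\<Prod>m\<in>{1..N}-{n}. a k m)) + M k =
        multiplicity (int p) (\<Prod>n\<in>{1..N}. a k n)" if k: "k \<in> {1..K}" for k
    proof -
      have c1: "card {n\<in>{1..N}. multiplicity (int p) (a k n) = M k} = 1" using H k unfolding M_def by blast
      obtain ns where ns: "{n\<in>{1..N}. multiplicity (int p) (a k n) = M k} = {ns}"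
        using card_1_singletonE[OF c1] by blast
      have nsI: "ns \<in> {1..N}" and mns: "multiplicity (int p) (a k ns) = M k" using ns by auto
      have lt: "\<forall>n\<in>{1..N}-{ns}. multiplicity (int p) (a k n) < multiplicity (int p) (a k ns)"
      proof
        fix n assume n: "n \<in> {1..N}-{ns}"
        have "multiplicity (int p) (a k n) \<le> M k" unfolding M_def using H n by (intro maxval_ge) auto
        moreover have "multiplicity (int p) (a k n) \<noteq> M k" using ns n by auto
        ultimately show "multiplicity (int p) (a k n) < multiplicity (int p) (a k ns)" using mns by simp
      qed
      have Mpos: "M k > 0" using good k by fastforce
      have pa: "int p dvd a k ns"
        using multiplicity_dvd'[of 1 "int p" "a k ns"] Mpos mns by simp
      have "\<not> int p dvd b k ns"
      proof
        assume "int p dvd b k ns"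
        hence "int p dvd gcd (a k ns) (b k ns)" using pa by simp
        thus False using coprime_p k nsI by auto
      qed
      hence b0: "multiplicity (int p) (b k ns) = 0" by (rule not_dvd_imp_multiplicity_0)
      have nzI: "\<forall>n\<in>{1..N}. a k n \<noteq> 0 \<and> b k n \<noteq> 0" using nonzero k by auto
      have "(\<Prod>n\<in>{1..N}. a k n) \<noteq> 0" using nzI by auto
      moreover have "(\<Sum>n\<in>{1..N}. b k n * (\<Prod>m\<in>{1..N}-{n}. a k m)) \<noteq> 0 \<and>
         multiplicity (int p) (\<Sum>n\<in>{1..N}. b k n * (\<Prod>m\<in>{1..N}-{n}. a k m)) + multiplicity (int p) (a k ns)
           = multiplicity (int p) (\<Prod>m\<in>{1..N}. a k m)"
        by (rule padic_T) (use p_prime nsI nzI lt b0 in auto)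
      ultimately show ?thesis using mns by simp
    qed
    show "(\<Sum>e\<in>S. C e * (\<Prod>k\<in>{1..K}. (\<Sum>n\<in>{1..N}. b k n * (\<Prod>m\<in>{1..N}-{n}. a k m)) ^ e k
          * (\<Prod>n\<in>{1..N}. a k n) ^ (E - e k))) \<noteq> 0"
    proof -
      have pp: "prime (int p)" using p_prime by simp
      have TD': "\<forall>k\<in>{1..K}. (\<Sum>n\<in>{1..N}. b k n * (\<Prod>m\<in>{1..N}-{n}. a k m)) \<noteq> 0 \<and> (\<Prod>n\<in>{1..N}. a k n) \<noteq> 0 \<and>
        multiplicity (int p) (\<Sum>n\<in>{1..N}. b k n * (\<Prod>m\<in>{1..N}-{n}. a k m)) + M k =
        multiplicity (int p) (\<Prod>n\<in>{1..N}. a k n)" using TD by blast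
      show ?thesis using Qnz[OF pp fin ne C TD' bd gp] .
    qed
  qed
qed

theorem theorem2:
  fixes K p :: nat and \<epsilon> \<kappa> :: real
    and a b :: "nat \<Rightarrow> nat \<Rightarrow> int"
    and s :: "nat \<Rightarrow> int" and A0 :: int
    and \<alpha> :: "nat \<Rightarrow> real"
  assumes K_pos: "K \<ge> 1"
    and p_prime: "prime p"
    and eps_pos: "\<epsilon> > 0"
    and kappa: "0 < \<kappa>" "\<kappa> < 1"
    and nonzero: "\<forall>k\<in>{1..K}. \<forall>n\<ge>1. a k n \<noteq> 0 \<and> b k n \<noteq> 0"
    and coprime_p: "\<forall>k\<in>{1..K}. \<forall>n\<ge>1. \<not> int p dvd gcd (a k n) (b k n)"
    and a0: "\<forall>n. a 0 n = 1"
    and unique_max: "\<forall>k\<in>{1..K}. \<forall>\<^sub>F N in sequentially.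
          card {n\<in>{1..N}. multiplicity (int p) (a k n) = maxval p (a k) N} = 1"
    and ratio_lim: "\<forall>k\<in>{1..K}.
          filterlim (\<lambda>N. real (maxval p (a k) N) / (1 + real (maxval p (a (k - 1)) N)))
            at_top sequentially"
    and s_pos: "\<forall>n\<ge>1. s n > 0"
    and s_mono: "\<forall>n\<ge>1. s n \<le> s (Suc n)"
    and growth: "\<forall>k\<in>{1..K}. \<forall>A::int. A \<ge> A0 \<longrightarrow> (\<forall>\<^sub>F n in sequentially.
          real n powr (1 + \<epsilon>) \<le> real_of_int (s n) \<and> s n \<le> s (Suc n) \<and>
          \<bar>real_of_int (b k n)\<bar> \<le> 2 powr (log 2 (real_of_int (s n)) powr \<kappa>) \<and>
          real_of_int (s n) * 2 powr (- (log 2 (real_of_int (s n)) powr \<kappa>))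
            \<le> \<bar>real_of_int (a k n)\<bar> \<and>
          \<bar>real_of_int (a k n)\<bar> \<le> max (real_of_int (s n) * 2 powr (log 2 (real_of_int (s n)) powr \<kappa>))
                                       (2 powr (real_of_int A ^ n)))"
    and limsup_inf: "\<forall>A::int. A \<ge> A0 \<longrightarrow>
          limsup (\<lambda>n. ereal (real_of_int (s n) powr (1 / real_of_int A ^ n))) = \<infinity>"
    and alpha_def: "\<forall>k\<in>{1..K}. \<alpha> k = (\<Sum>n. real_of_int (b k (Suc n)) / real_of_int (a k (Suc n)))"
  shows "alg_indep_over_Q K \<alpha>"
  unfolding alg_indep_over_Q_def
proof (intro allI impI)
  fix S :: "(nat \<Rightarrow> nat) set" and c :: "(nat \<Rightarrow> nat) \<Rightarrow> rat"
  assume H: "finite S \<and> (\<forall>e\<in>S. \<forall>i. i \<notin> {1..K} \<longrightarrow> e i = 0) \<and>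
        (\<Sum>e\<in>S. of_rat (c e) * (\<Prod>k\<in>{1..K}. \<alpha> k ^ e k)) = 0"
  show "\<forall>e\<in>S. c e = 0"
  proof (rule ccontr)
    assume "\<not> (\<forall>e\<in>S. c e = 0)"
    then obtain e0 where e0: "e0 \<in> S" "c e0 \<noteq> 0" by auto
    define S' where "S' = {e\<in>S. c e \<noteq> 0}"
    have finS': "finite S'" using H unfolding S'_def by auto
    have neS': "S' \<noteq> {}" using e0 unfolding S'_def by auto
    have suppS': "\<forall>e\<in>S'. \<forall>i. i \<notin> {1..K} \<longrightarrow> e i = 0" using H unfolding S'_def by auto
    have sumS': "(\<Sum>e\<in>S'. of_rat (c e) * (\<Prod>k\<in>{1..K}. \<alpha> k ^ e k)) = 0"
    proof -
      have "(\<Sum>e\<in>S'. of_rat (c e) * (\<Prod>k\<in>{1..K}. \<alpha> k ^ e k)) =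
            (\<Sum>e\<in>S. of_rat (c e) * (\<Prod>k\<in>{1..K}. \<alpha> k ^ e k))"
        unfolding S'_def by (rule sum.mono_neutral_left) (use H in auto)
      with H show ?thesis by simp
    qed
    define den where "den e = snd (quotient_of (c e))" for e
    define num where "num e = fst (quotient_of (c e))" for e
    have den0: "den e > 0" for e unfolding den_def by (rule quotient_of_denom_pos')
    have cnd: "c e = of_int (num e) / of_int (den e)" for e
      using quotient_of_div[of "c e" "num e" "den e"] unfolding num_def den_def by simp
    define L0 where "L0 = (\<Prod>e\<in>S'. den e)"
    have L0pos: "L0 > 0" unfolding L0_def using den0 by (intro prod_pos) auto
    define C where "C e = num e * (L0 div den e)" for e
    have Creal: "real_of_int (C e) = real_of_int L0 * real_of_rat (c e)" if e: "e \<in> S'" for e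
    proof -
      have "den e dvd L0" using finS' e unfolding L0_def by auto
      then obtain q where q: "L0 = den e * q" by (auto elim: dvdE)
      have "L0 div den e = q" using q den0[of e] by simp
      hence "C e = num e * q" unfolding C_def by simp
      moreover have "real_of_rat (c e) = real_of_int (num e) / real_of_int (den e)"
        using cnd[of e] by (simp add: of_rat_divide)
      ultimately show ?thesis using q den0[of e] by (simp add: field_simps)
    qed
    have Cnz: "C e \<noteq> 0" if e: "e \<in> S'" for e
    proof -
      have "real_of_rat (c e) \<noteq> 0" using e unfolding S'_def by simp
      hence "real_of_int (C e) \<noteq> 0" using Creal[OF e] L0pos by simp
      thus ?thesis by auto
    qed
    define E where "E = (\<Sum>e\<in>S'. \<Sum>k\<in>{1..K}. e k)"
    have bdE: "\<forall>e\<in>S'. \<forall>k\<in>{1..K}. e k \<le> E"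
    proof (intro ballI)
      fix e k assume e: "e \<in> S'" and k: "k \<in> {1..K}"
      have "e k \<le> (\<Sum>k\<in>{1..K}. e k)" using k by (intro member_le_sum) auto
      also have "\<dots> \<le> E" unfolding E_def using e finS' by (intro member_le_sum) auto
      finally show "e k \<le> E" .
    qed
    define c0 where "c0 = (\<Sum>e\<in>S'. multiplicity (int p) (C e))"
    have Cc0: "\<forall>e\<in>S'. C e \<noteq> 0 \<and> multiplicity (int p) (C e) \<le> c0"
      unfolding c0_def using Cnz finS' by (auto intro: member_le_sum)
    define F where "F x = (\<Sum>e\<in>S'. real_of_int (C e) * (\<Prod>k\<in>{1..K}. x k ^ e k))" for x :: "nat \<Rightarrow> real"
    have Fa: "F \<alpha> = 0"
    proof -
      have "F \<alpha> = (\<Sum>e\<in>S'. real_of_int L0 * (of_rat (c e) * (\<Prod>k\<in>{1..K}. \<alpha> k ^ e k)))"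
        unfolding F_def using Creal by (intro sum.cong) auto
      also have "\<dots> = real_of_int L0 * (\<Sum>e\<in>S'. of_rat (c e) * (\<Prod>k\<in>{1..K}. \<alpha> k ^ e k))"
        by (simp add: sum_distrib_left)
      finally show ?thesis using sumS' by simp
    qed
    define t where "t k n = real_of_int (b k (Suc n)) / real_of_int (a k (Suc n))" for k n
    have nz': "\<forall>k\<in>{1..K}. \<forall>n\<ge>1. a k n \<noteq> 0" using nonzero by auto
    have part1: "\<forall>k\<in>{1..K}. summable (\<lambda>n. \<bar>t k n\<bar>)"
      using analytic[where E = E and Lf = 0, OF kappa eps_pos nz' s_pos s_mono growth limsup_inf order_refl K_pos]
      unfolding t_def by blast
    have alph: "\<alpha> k = suminf (t k)" if "k \<in> {1..K}" for k using alpha_def that unfolding t_def by auto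
    define B where "B = 1 + (\<Sum>k\<in>{1..K}. \<Sum>n. \<bar>t k n\<bar>)"
    have sa0: "(\<Sum>n. \<bar>t k n\<bar>) \<ge> 0" if "k \<in> {1..K}" for k
      using part1 that by (intro suminf_nonneg) auto
    have sakB: "(\<Sum>n. \<bar>t k n\<bar>) \<le> B - 1" if k: "k \<in> {1..K}" for k
      unfolding B_def using k sa0 by (simp, intro member_le_sum) auto
    have "0 \<le> (\<Sum>k\<in>{1..K}. \<Sum>n. \<bar>t k n\<bar>)" by (rule sum_nonneg) (use sa0 in auto)
    hence B1: "B \<ge> 1" unfolding B_def by simp
    have Ba: "\<bar>\<alpha> k\<bar> \<le> B" if k: "k \<in> {1..K}" for k
      using summable_rabs[OF part1[rule_format, OF k]] sakB[OF k] alph[OF k] by simp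
    have Bx: "\<bar>\<Sum>n<N. t k n\<bar> \<le> B" if k: "k \<in> {1..K}" for k N
    proof -
      have "\<bar>\<Sum>n<N. t k n\<bar> \<le> (\<Sum>n<N. \<bar>t k n\<bar>)" by (rule sum_abs)
      also have "\<dots> \<le> (\<Sum>n. \<bar>t k n\<bar>)" using part1 k by (intro sum_le_suminf) auto
      finally show ?thesis using sakB[OF k] by simp
    qed
    define Lm where "Lm = B ^ (E * K) * (real K * (B ^ E * real E))"
    define Lf where "Lf = (\<Sum>e\<in>S'. \<bar>real_of_int (C e)\<bar> * Lm)"
    have Lm0: "Lm \<ge> 0" unfolding Lm_def using B1 by simp
    have Lf0: "Lf \<ge> 0" unfolding Lf_def using Lm0 by (intro sum_nonneg) auto
    have Flip: "\<bar>F x - F y\<bar> \<le> Lf * \<delta>"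
      if bx: "\<forall>k\<in>{1..K}. \<bar>x k\<bar> \<le> B \<and> \<bar>y k\<bar> \<le> B" and d: "\<forall>k\<in>{1..K}. \<bar>x k - y k\<bar> \<le> \<delta>" for x y \<delta>
    proof -
      have "F x - F y = (\<Sum>e\<in>S'. real_of_int (C e) * ((\<Prod>k\<in>{1..K}. x k ^ e k) - (\<Prod>k\<in>{1..K}. y k ^ e k)))"
        unfolding F_def by (simp add: sum_subtractf algebra_simps)
      also have "\<bar>\<dots>\<bar> \<le> (\<Sum>e\<in>S'. \<bar>real_of_int (C e)\<bar> * \<bar>(\<Prod>k\<in>{1..K}. x k ^ e k) - (\<Prod>k\<in>{1..K}. y k ^ e k)\<bar>)"
        by (rule order_trans[OF sum_abs]) (simp add: abs_mult)
      also have "\<dots> \<le> (\<Sum>e\<in>S'. \<bar>real_of_int (C e)\<bar> * (Lm * \<delta>))"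
      proof (intro sum_mono mult_left_mono)
        fix e assume e: "e \<in> S'"
        have "\<bar>(\<Prod>k\<in>{1..K}. x k ^ e k) - (\<Prod>k\<in>{1..K}. y k ^ e k)\<bar>
            \<le> B ^ (E * K) * (real K * (B ^ E * (real E * \<delta>)))"
          by (rule mon_lip[OF B1 bx]) (use bdE e d in auto)
        thus "\<bar>(\<Prod>k\<in>{1..K}. x k ^ e k) - (\<Prod>k\<in>{1..K}. y k ^ e k)\<bar> \<le> Lm * \<delta>"
          unfolding Lm_def by (simp add: algebra_simps)
      qed auto
      also have "\<dots> = Lf * \<delta>" unfolding Lf_def sum_distrib_right by (simp add: mult.assoc)
      finally show ?thesis .
    qed
    have an: "\<forall>N0. \<exists>N\<ge>N0. (\<Prod>k\<in>{1..K}. \<bar>real_of_int (\<Prod>n\<in>{1..N}. a k n)\<bar>) ^ E * Lf *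
            (\<Sum>k\<in>{1..K}. \<Sum>n. \<bar>t k (n + N)\<bar>) < 1"
      using analytic[where E = E and Lf = Lf, OF kappa eps_pos nz' s_pos s_mono growth limsup_inf Lf0 K_pos]
      unfolding t_def by blast
    have alg: "\<forall>\<^sub>F N in sequentially.
     (\<Sum>e\<in>S'. C e * (\<Prod>k\<in>{1..K}. (\<Sum>n\<in>{1..N}. b k n * (\<Prod>m\<in>{1..N}-{n}. a k m)) ^ e k
          * (\<Prod>n\<in>{1..N}. a k n) ^ (E - e k))) \<noteq> 0"
      by (rule alg_part[OF p_prime nonzero coprime_p unique_max ratio_lim finS' neS' Cc0 suppS' bdE])
    then obtain N0 where N0: "\<forall>N\<ge>N0. (\<Sum>e\<in>S'. C e * (\<Prod>k\<in>{1..K}. (\<Sum>n\<in>{1..N}. b k n * (\<Prod>m\<in>{1..N}-{n}. a k m)) ^ e k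
          * (\<Prod>n\<in>{1..N}. a k n) ^ (E - e k))) \<noteq> 0"
      unfolding eventually_sequentially by blast
    obtain N where N: "N \<ge> N0" and Nb: "(\<Prod>k\<in>{1..K}. \<bar>real_of_int (\<Prod>n\<in>{1..N}. a k n)\<bar>) ^ E * Lf *
            (\<Sum>k\<in>{1..K}. \<Sum>n. \<bar>t k (n + N)\<bar>) < 1" using an by blast
    define T where "T k = (\<Sum>n\<in>{1..N}. b k n * (\<Prod>m\<in>{1..N}-{n}. a k m))" for k
    define D where "D k = (\<Prod>n\<in>{1..N}. a k n)" for k
    define x where "x k = (\<Sum>n<N. t k n)" for k
    define Q where "Q = (\<Sum>e\<in>S'. C e * (\<Prod>k\<in>{1..K}. T k ^ e k * D k ^ (E - e k)))"
    have Qnz: "Q \<noteq> 0" using N0 N unfolding Q_def T_def D_def by blast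
    have TD: "\<forall>k\<in>{1..K}. real_of_int (T k) = real_of_int (D k) * x k"
    proof
      fix k assume k: "k \<in> {1..K}"
      show "real_of_int (T k) = real_of_int (D k) * x k"
        unfolding T_def D_def x_def t_def by (rule Sr_eq) (use nonzero k in auto)
    qed
    have Qr: "real_of_int Q = (\<Prod>k\<in>{1..K}. real_of_int (D k)) ^ E * F x"
      unfolding Q_def F_def by (rule Q_real[OF TD bdE])
    define \<delta> where "\<delta> = (\<Sum>k\<in>{1..K}. \<Sum>n. \<bar>t k (n + N)\<bar>)"
    have tl0: "(\<Sum>n. \<bar>t k (n + N)\<bar>) \<ge> 0" if k: "k \<in> {1..K}" for k
      using summable_ignore_initial_segment[OF part1[rule_format, OF k], of N] by (intro suminf_nonneg) auto
    have tails: "\<bar>x k - \<alpha> k\<bar> \<le> \<delta>" if k: "k \<in> {1..K}" for k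
    proof -
      have st: "summable (t k)" using part1 k summable_rabs_cancel by blast
      have "\<alpha> k - x k = (\<Sum>n. t k (n + N))"
        unfolding alph[OF k] x_def using suminf_minus_initial_segment[OF st, of N] by simp
      hence "\<bar>x k - \<alpha> k\<bar> = \<bar>\<Sum>n. t k (n + N)\<bar>" by simp
      also have "\<dots> \<le> (\<Sum>n. \<bar>t k (n + N)\<bar>)"
        by (rule summable_rabs) (rule summable_ignore_initial_segment[OF part1[rule_format, OF k]])
      also have "\<dots> \<le> \<delta>" unfolding \<delta>_def using k tl0 by (intro member_le_sum) auto
      finally show ?thesis .
    qed
    have FF: "\<bar>F x - F \<alpha>\<bar> \<le> Lf * \<delta>"
      by (rule Flip) (use Bx Ba tails in \<open>auto simp: x_def\<close>)
    have "\<bar>real_of_int Q\<bar> = (\<Prod>k\<in>{1..K}. \<bar>real_of_int (D k)\<bar>) ^ E * \<bar>F x - F \<alpha>\<bar>"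
      unfolding Qr Fa by (simp add: abs_mult power_abs abs_prod)
    also have "\<dots> \<le> (\<Prod>k\<in>{1..K}. \<bar>real_of_int (D k)\<bar>) ^ E * (Lf * \<delta>)"
      using FF by (intro mult_left_mono zero_le_power prod_nonneg) auto
    also have "\<dots> < 1" using Nb unfolding D_def \<delta>_def by (simp add: mult.assoc)
    finally have "\<bar>Q\<bar> < 1" by linarith
    hence "Q = 0" by simp
    thus False using Qnz by simp
  qed
qed

end
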